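(* Let $\alpha>1$, let $X=\{x_j:j\in J\}\subset\mathbb{R}^2$ be finite, and let $s'\in\mathbb{R}^2$. Then $s'$ is the minimiser of $s\mapsto P_2(s,X(s'))$ if and only if $s'=s_\alpha^*$.
   Context: For $\beta>1$ and a finite indexed family $Y=(y_j)_{j\in J}$, $P_\beta(s,Y)=\sum_{j\in J}\|s-y_j\|^\beta+\max_{j\in J}\|s-y_j\|^\beta$; $s_\alpha^*$ is the unique minimiser of $P_\alpha(\cdot,X)$. For a point $s$, $x_j(s)=s+\|s-x_j\|^{\alpha-2}(x_j-s)$ (with $x_j(s)=s$ when $s=x_j$), so that $\|x_j(s)-s\|=\|x_j-s\|^{\alpha-1}$, and $X(s)=(x_j(s))_{j\in J}$. *)

theory Defs
  imports "HOL-Analysis.Analysis"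
begin

definition P :: "real \<Rightarrow> 'j set \<Rightarrow> ('j \<Rightarrow> real^2) \<Rightarrow> real^2 \<Rightarrow> real" where
  "P beta J y s = (\<Sum>j\<in>J. norm (s - y j) powr beta) + Max ((\<lambda>j. norm (s - y j) powr beta) ` J)"

definition is_minimiser :: "('a \<Rightarrow> real) \<Rightarrow> 'a \<Rightarrow> bool" where
  "is_minimiser f s \<longleftrightarrow> (\<forall>t. f s \<le> f t)"

definition s_star :: "real \<Rightarrow> 'j set \<Rightarrow> ('j \<Rightarrow> real^2) \<Rightarrow> real^2" where
  "s_star alpha J x = (THE s. is_minimiser (P alpha J x) s)"

definition Xs :: "real \<Rightarrow> ('j \<Rightarrow> real^2) \<Rightarrow> real^2 \<Rightarrow> 'j \<Rightarrow> real^2" where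
  "Xs alpha x s j = (if s = x j then s else s + (norm (s - x j) powr (alpha - 2)) *\<^sub>R (x j - s))"

end

theory Submission
  imports Defs
begin
lemma pow_grad:
  fixes a b al :: real assumes "al > 1" "a \<ge> 0" "b \<ge> 0"
  shows "a powr al + al * a powr (al-1) * (b - a) \<le> b powr al"
proof (cases "a = 0")
  case True then show ?thesis using assms by simp
next
  case False
  hence a: "a > 0" using assms by simp
  have "a powr (al-1) * b \<le> (a powr (al-1)) powr (al/(al-1)) / (al/(al-1)) + b powr al / al"
    by (rule Youngs_inequality) (use assms in \<open>auto simp: field_simps\<close>)
  also have "(a powr (al-1)) powr (al/(al-1)) = a powr al"
    using assms by (simp add: powr_powr)
  finally have "a powr (al-1) * b \<le> a powr al * (al-1)/al + b powr al / al"
    using assms by (simp add: field_simps)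
  hence "al * (a powr (al-1) * b) \<le> a powr al * (al-1) + b powr al"
    using assms by (simp add: field_simps)
  moreover have "a powr (al-1) * a = a powr al"
  proof -
    have "a powr al = a powr ((al-1)+1)" by simp
    also have "\<dots> = a powr (al-1) * a" using a by (simp only: powr_add powr_one)
    finally show ?thesis by simp
  qed
  ultimately show ?thesis by (simp add: algebra_simps)
qed

lemma pow_grad_strict:
  fixes a b al :: real assumes "al > 1" "a > 0" "b \<ge> 0" "a \<noteq> b"
  shows "a powr al + al * a powr (al-1) * (b - a) < b powr al"
proof -
  define m where "m = (a+b)/2"
  have m: "m > 0" using assms by (simp add: m_def)
  have 1: "m powr al + al * m powr (al-1) * (b - m) \<le> b powr al"
    using pow_grad[of al m b] assms m by simp
  have 2: "a powr al + al * a powr (al-1) * (m - a) \<le> m powr al"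
    using pow_grad[of al a m] assms m by simp
  have bm: "b - m = (b-a)/2" "m - a = (b-a)/2" by (simp_all add: m_def field_simps)
  have "(m powr (al-1) - a powr (al-1)) * (b - a) > 0"
  proof (cases "b > a")
    case True
    hence "m > a" by (simp add: m_def)
    hence "m powr (al-1) > a powr (al-1)" using assms by (intro powr_less_mono2) auto
    then show ?thesis using True by simp
  next
    case False
    hence "b < a" using assms by simp
    hence "m < a" by (simp add: m_def)
    hence "m powr (al-1) < a powr (al-1)" using assms m by (intro powr_less_mono2) auto
    then show ?thesis using \<open>b < a\<close> by (simp add: mult_neg_neg)
  qed
  hence "al * ((m powr (al-1) - a powr (al-1)) * (b - a)) > 0" using assms by simp
  moreover have "al * ((m powr (al-1) - a powr (al-1)) * (b-a)) = al * m powr (al-1) * (b-a) - al * a powr (al-1)*(b-a)"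
    by (simp add: algebra_simps)
  moreover have "al * m powr (al-1) * ((b-a)/2) = (al * m powr (al-1) * (b-a))/2"
    "al * a powr (al-1) * ((b-a)/2) = (al * a powr (al-1) * (b-a))/2" by simp_all
  ultimately show ?thesis using 1 2 unfolding bm by linarith
qed

lemma vec_grad:
  fixes y z :: "'a::real_inner" and al :: real assumes "al > 1"
  shows "norm z powr al + al * norm z powr (al-2) * (z \<bullet> (y - z)) \<le> norm y powr al"
proof (cases "z = 0")
  case True then show ?thesis by simp
next
  case False
  hence a: "norm z > 0" by simp
  have e: "norm z powr (al-2) * norm z = norm z powr (al - 1)"
  proof -
    have "norm z powr (al-1) = norm z powr ((al-2)+1)" by simp
    also have "\<dots> = norm z powr (al-2) * norm z" using a by (simp only: powr_add powr_one norm_ge_zero)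
    finally show ?thesis by simp
  qed
  have e2: "norm z powr (al-2) * (norm z * norm z) = norm z powr al"
  proof -
    have "norm z powr al = norm z powr ((al-2)+1+1)" by simp
    also have "\<dots> = norm z powr (al-2) * (norm z * norm z)" using a
      by (simp only: powr_add powr_one norm_ge_zero mult.assoc)
    finally show ?thesis by simp
  qed
  have zz: "z \<bullet> (y - z) = z \<bullet> y - norm z * norm z"
    by (simp add: inner_diff_right power2_eq_square flip: power2_norm_eq_inner)
  have "z \<bullet> y \<le> norm z * norm y" by (rule norm_cauchy_schwarz)
  hence "norm z powr (al-2) * (z \<bullet> (y - z)) \<le> norm z powr (al-2) * (norm z * norm y - norm z * norm z)"
    unfolding zz by (intro mult_left_mono) auto
  also have "\<dots> = norm z powr (al-1) * (norm y - norm z)"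
    using e by (simp add: algebra_simps)
  finally have "al * (norm z powr (al-2) * (z \<bullet> (y - z))) \<le> al * (norm z powr (al-1) * (norm y - norm z))"
    using assms by simp
  moreover have "norm z powr al + al * norm z powr (al-1) * (norm y - norm z) \<le> norm y powr al"
    using pow_grad[of al "norm z" "norm y"] assms by simp
  ultimately show ?thesis by (simp add: algebra_simps)
qed

lemma vec_grad_strict:
  fixes y z :: "'a::real_inner" and al :: real assumes "al > 1" "y \<noteq> z"
  shows "norm z powr al + al * norm z powr (al-2) * (z \<bullet> (y - z)) < norm y powr al"
proof (cases "z = 0")
  case True then show ?thesis using assms by simp
next
  case False
  hence a: "norm z > 0" by simp
  have e: "norm z powr (al-2) * norm z = norm z powr (al - 1)"
  proof -
    have "norm z powr (al-1) = norm z powr ((al-2)+1)" by simp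
    also have "\<dots> = norm z powr (al-2) * norm z" using a by (simp only: powr_add powr_one norm_ge_zero)
    finally show ?thesis by simp
  qed
  have zz: "z \<bullet> (y - z) = z \<bullet> y - norm z * norm z"
    by (simp add: inner_diff_right power2_eq_square flip: power2_norm_eq_inner)
  show ?thesis
  proof (cases "norm y = norm z")
    case True
    have "0 < norm (y - z) ^ 2" using assms by simp
    also have "norm (y - z) ^ 2 = norm y ^ 2 + norm z ^ 2 - 2 * (z \<bullet> y)"
      by (simp add: power2_norm_eq_inner inner_diff_left inner_diff_right inner_commute)
    finally have "z \<bullet> y < norm z * norm y" using True by (simp add: power2_eq_square)
    hence "norm z powr (al-2) * (z \<bullet> (y - z)) < norm z powr (al-2) * (norm z * norm y - norm z * norm z)"
      unfolding zz using a by (intro mult_strict_left_mono) auto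
    also have "\<dots> = 0" using True by simp
    finally have "al * (norm z powr (al-2) * (z \<bullet> (y - z))) < 0"
      using assms by (simp add: mult_pos_neg)
    then show ?thesis using True by simp
  next
    case False
    have "z \<bullet> y \<le> norm z * norm y" by (rule norm_cauchy_schwarz)
    hence "norm z powr (al-2) * (z \<bullet> (y - z)) \<le> norm z powr (al-2) * (norm z * norm y - norm z * norm z)"
      unfolding zz by (intro mult_left_mono) auto
    also have "\<dots> = norm z powr (al-1) * (norm y - norm z)"
      using e by (simp add: algebra_simps)
    finally have "al * (norm z powr (al-2) * (z \<bullet> (y - z))) \<le> al * (norm z powr (al-1) * (norm y - norm z))"
      using assms by simp
    moreover have "norm z powr al + al * norm z powr (al-1) * (norm y - norm z) < norm y powr al"
      using pow_grad_strict[of al "norm z" "norm y"] assms a False by simp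
    ultimately show ?thesis by (simp add: algebra_simps)
  qed
qed

lemma G_cont:
  fixes z d :: "'a::real_inner" and al :: real assumes "al > 1"
  shows "((\<lambda>t. al * norm (z + t *\<^sub>R d) powr (al-2) * ((z + t *\<^sub>R d) \<bullet> d))
          \<longlongrightarrow> al * norm z powr (al-2) * (z \<bullet> d)) (at_right 0)"
proof (cases "z = 0")
  case False
  have lim: "((\<lambda>t::real. z + t *\<^sub>R d) \<longlongrightarrow> z) (at_right 0)"
    by (auto intro!: tendsto_eq_intros)
  show ?thesis using False
    by (auto intro!: tendsto_intros tendsto_powr lim)
next
  case True
  have lim: "((\<lambda>t::real. al * norm (t *\<^sub>R d) powr (al-1) * norm d) \<longlongrightarrow> al * 0 powr (al-1) * norm d) (at_right 0)"
    using assms by (intro tendsto_intros tendsto_powr') (auto intro!: tendsto_eq_intros)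
  have bnd: "norm (al * norm v powr (al-2) * (v \<bullet> d)) \<le> al * norm v powr (al-1) * norm d" for v :: 'a
  proof (cases "v = 0")
    case True then show ?thesis by simp
  next
    case False
    have e: "norm v powr (al-2) * norm v = norm v powr (al - 1)"
    proof -
      have "norm v powr (al-1) = norm v powr ((al-2)+1)" by simp
      also have "\<dots> = norm v powr (al-2) * norm v" using False by (simp only: powr_add powr_one norm_ge_zero)
      finally show ?thesis by simp
    qed
    have "norm (al * norm v powr (al-2) * (v \<bullet> d)) = al * norm v powr (al-2) * \<bar>v \<bullet> d\<bar>"
      using assms by (simp add: abs_mult)
    also have "\<dots> \<le> al * norm v powr (al-2) * (norm v * norm d)"
      using assms by (intro mult_left_mono Cauchy_Schwarz_ineq2) auto
    also have "\<dots> = al * norm v powr (al-1) * norm d" using e by (simp add: algebra_simps)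
    finally show ?thesis .
  qed
  have "((\<lambda>t. al * norm (z + t *\<^sub>R d) powr (al-2) * ((z + t *\<^sub>R d) \<bullet> d)) \<longlongrightarrow> 0) (at_right 0)"
  proof (rule Lim_null_comparison[OF _ lim[unfolded powr_0 mult_zero_right mult_zero_left]])
    show "\<forall>\<^sub>F t in at_right 0. norm (al * norm (z + t *\<^sub>R d) powr (al - 2) * ((z + t *\<^sub>R d) \<bullet> d))
          \<le> al * norm (t *\<^sub>R d) powr (al - 1) * norm d"
      by (intro always_eventually allI) (use bnd[of "_ *\<^sub>R d"] True in \<open>simp only: add_0\<close>)
  qed
  then show ?thesis using True by simp
qed

lemma f_H2:
  fixes z d :: "'a::real_inner" and al e :: real assumes "al > 1" "e > 0"
  shows "eventually (\<lambda>t. norm (z + t *\<^sub>R d) powr al \<le> norm z powr al + t * (al * norm z powr (al-2) * (z \<bullet> d) + e)) (at_right 0)"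
proof -
  have "eventually (\<lambda>t. al * norm (z + t *\<^sub>R d) powr (al-2) * ((z + t *\<^sub>R d) \<bullet> d) < al * norm z powr (al-2) * (z \<bullet> d) + e) (at_right 0)"
    using G_cont[OF assms(1), of z d] assms(2) by (intro order_tendstoD(2)) auto
  moreover have "eventually (\<lambda>t::real. t > 0) (at_right 0)" by (simp add: eventually_at_right_less)
  ultimately show ?thesis
  proof eventually_elim
    case (elim t)
    have g: "norm (z + t *\<^sub>R d) powr al + al * norm (z + t *\<^sub>R d) powr (al-2) * ((z + t *\<^sub>R d) \<bullet> (z - (z + t *\<^sub>R d))) \<le> norm z powr al"
      by (rule vec_grad[OF assms(1)])
    have "(z + t *\<^sub>R d) \<bullet> (z - (z + t *\<^sub>R d)) = - t * ((z + t *\<^sub>R d) \<bullet> d)"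
      by (simp add: inner_diff_right)
    hence "norm (z + t *\<^sub>R d) powr al \<le> norm z powr al + t * (al * norm (z + t *\<^sub>R d) powr (al-2) * ((z + t *\<^sub>R d) \<bullet> d))"
      using g by (simp add: algebra_simps)
    also have "\<dots> \<le> norm z powr al + t * (al * norm z powr (al-2) * (z \<bullet> d) + e)"
      using elim by (intro add_left_mono mult_left_mono) auto
    finally show ?case .
  qed
qed

lemma powr_le_iff_base:
  fixes a b p :: real assumes "a \<ge> 0" "b \<ge> 0" "p > 0"
  shows "a powr p \<le> b powr p \<longleftrightarrow> a \<le> b"
  using assms by (metis not_le powr_less_mono2 powr_mono2 less_imp_le)

lemma char:
  fixes beta :: real and J :: "'j set" and y :: "'j \<Rightarrow> real^2" and s :: "real^2"
  assumes b: "beta > 1" and fin: "finite J" and ne: "J \<noteq> {}"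
  defines "A \<equiv> {k\<in>J. \<forall>i\<in>J. norm (s - y i) \<le> norm (s - y k)}"
    and "D \<equiv> \<lambda>j d. beta * norm (s - y j) powr (beta - 2) * ((s - y j) \<bullet> d)"
  shows "is_minimiser (P beta J y) s \<longleftrightarrow> (\<forall>d. \<exists>k\<in>A. 0 \<le> (\<Sum>j\<in>J. D j d) + D k d)"
proof -
  define phi where "phi = (\<lambda>j t. norm (t - y j) powr beta)"
  have Pdef: "P beta J y t = (\<Sum>j\<in>J. phi j t) + Max ((\<lambda>j. phi j t) ` J)" for t
    by (simp add: P_def phi_def)
  define Mv where "Mv = Max ((\<lambda>j. phi j s) ` J)"
  have fin': "finite ((\<lambda>j. phi j t) ` J)" "(\<lambda>j. phi j t) ` J \<noteq> {}" for t using fin ne by auto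
  have monoph: "phi i t \<le> phi k t \<longleftrightarrow> norm (t - y i) \<le> norm (t - y k)" for i k t
    unfolding phi_def using b by (intro powr_le_iff_base) auto
  have Mge: "phi j t \<le> Max ((\<lambda>j. phi j t) ` J)" if "j \<in> J" for j t
    using fin' that by (intro Max_ge) auto
  have AM: "phi k s = Mv" if "k \<in> A" for k
    unfolding Mv_def using that fin' by (intro Max_eqI[symmetric]) (auto simp: A_def monoph)
  have nA: "phi j s < Mv" if "j \<in> J" "j \<notin> A" for j
  proof -
    from that obtain i where i: "i \<in> J" "norm (s - y i) > norm (s - y j)" unfolding A_def by auto
    hence "phi j s < phi i s" using monoph[where i=i and k=j and t=s] by linarith
    also have "\<dots> \<le> Mv" unfolding Mv_def using Mge i by auto
    finally show ?thesis .
  qed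
  have Ane: "A \<noteq> {}"
  proof -
    obtain k where k: "k \<in> J" "phi k s = Mv" unfolding Mv_def using Max_in[OF fin'(1,2), of s] by (metis (no_types, lifting) imageE)
    hence "k \<in> A" using nA by fastforce
    thus ?thesis by auto
  qed
  have finA: "finite A" using fin unfolding A_def by auto
  have AJ: "A \<subseteq> J" unfolding A_def by auto
  have H1: "phi j s + D j d \<le> phi j (s + d)" for j d
    using vec_grad[OF b, of "s - y j" "s + d - y j"] unfolding phi_def D_def
    by (simp add: algebra_simps)
  have H2: "eventually (\<lambda>t. phi j (s + t *\<^sub>R d) \<le> phi j s + t * (D j d + e)) (at_right 0)"
    if "e > 0" for j d e
    using f_H2[OF b that, of "s - y j" d] unfolding phi_def D_def
    by (simp add: algebra_simps)
  show ?thesis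
  proof
    assume min: "is_minimiser (P beta J y) s"
    show "\<forall>d. \<exists>k\<in>A. 0 \<le> (\<Sum>j\<in>J. D j d) + D k d"
    proof (rule ccontr)
      assume "\<not> ?thesis"
      then obtain d where neg: "\<And>k. k \<in> A \<Longrightarrow> (\<Sum>j\<in>J. D j d) + D k d < 0" by (auto simp: not_le)
      define m where "m = Max ((\<lambda>k. D k d) ` A)"
      obtain k0 where k0: "k0 \<in> A" "D k0 d = m" unfolding m_def using Max_in[of "(\<lambda>k. D k d) ` A"] finA Ane by (metis (no_types, lifting) finite_imageI image_is_empty imageE)
      have mge: "D k d \<le> m" if "k \<in> A" for k unfolding m_def using finA that by (intro Max_ge) auto
      define S where "S = (\<Sum>j\<in>J. D j d) + m"
      have S: "S < 0" using neg[OF k0(1)] k0 by (simp add: S_def)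
      define e where "e = - S / (2 * (card J + 1))"
      have e: "e > 0" using S by (simp add: e_def divide_neg_pos)
      have ev1: "eventually (\<lambda>t. \<forall>j\<in>J. phi j (s + t *\<^sub>R d) \<le> phi j s + t * (D j d + e)) (at_right 0)"
        using fin H2[OF e] by (simp add: eventually_ball_finite)
      have ev2: "eventually (\<lambda>t. \<forall>j\<in>J - A. t * (D j d - m) < Mv - phi j s) (at_right 0)"
      proof -
        have "eventually (\<lambda>t. t * (D j d - m) < Mv - phi j s) (at_right 0)" if "j \<in> J - A" for j
        proof (rule order_tendstoD(2))
          show "((\<lambda>t::real. t * (D j d - m)) \<longlongrightarrow> 0 * (D j d - m)) (at_right 0)"
            by (intro tendsto_intros)
          show "0 * (D j d - m) < Mv - phi j s" using nA that by auto
        qed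
        thus ?thesis using fin by (simp add: eventually_ball_finite)
      qed
      have ev3: "eventually (\<lambda>t::real. t > 0) (at_right 0)" by (simp add: eventually_at_right_less)
      obtain t where t: "\<forall>j\<in>J. phi j (s + t *\<^sub>R d) \<le> phi j s + t * (D j d + e)"
        "\<forall>j\<in>J - A. t * (D j d - m) < Mv - phi j s" "t > 0"
        using eventually_happens'[OF _ eventually_conj[OF ev1 eventually_conj[OF ev2 ev3]]] by auto
      have "Max ((\<lambda>j. phi j (s + t *\<^sub>R d)) ` J) \<le> Mv + t * (m + e)"
      proof (subst Max_le_iff[OF fin'])
        show "\<forall>a\<in>(\<lambda>j. phi j (s + t *\<^sub>R d)) ` J. a \<le> Mv + t * (m + e)"
        proof safe
          fix j assume j: "j \<in> J"
          show "phi j (s + t *\<^sub>R d) \<le> Mv + t * (m + e)"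
          proof (cases "j \<in> A")
            case True
            have "t * D j d \<le> t * m" using mge[OF True] t(3) by simp
            thus ?thesis using t(1) j AM[OF True] by (simp add: algebra_simps) (smt (verit) j t(1))
          next
            case False
            have "phi j (s + t *\<^sub>R d) \<le> phi j s + t * (D j d + e)" using t(1) j by auto
            moreover have "t * (D j d - m) < Mv - phi j s" using t(2) j False by auto
            ultimately show ?thesis by (simp add: algebra_simps)
          qed
        qed
      qed
      moreover have "(\<Sum>j\<in>J. phi j (s + t *\<^sub>R d)) \<le> (\<Sum>j\<in>J. phi j s + t * (D j d + e))"
        using t(1) by (intro sum_mono) auto
      moreover have "(\<Sum>j\<in>J. phi j s + t * (D j d + e)) = (\<Sum>j\<in>J. phi j s) + t * (\<Sum>j\<in>J. D j d) + t * card J * e"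
        by (simp add: sum.distrib sum_distrib_left algebra_simps)
      moreover have "t * S + t * (card J + 1) * e = t * S / 2"
        using S by (simp add: e_def field_simps)
      moreover have "t * S / 2 < 0" using S t(3) by (simp add: mult_pos_neg)
      ultimately have "P beta J y (s + t *\<^sub>R d) < P beta J y s"
        unfolding Pdef Mv_def[symmetric] S_def by (simp add: algebra_simps)
      thus False using min unfolding is_minimiser_def by (meson not_le)
    qed
  next
    assume cond: "\<forall>d. \<exists>k\<in>A. 0 \<le> (\<Sum>j\<in>J. D j d) + D k d"
    show "is_minimiser (P beta J y) s" unfolding is_minimiser_def
    proof
      fix u
      define d where "d = u - s"
      have u: "u = s + d" by (simp add: d_def)
      obtain k where k: "k \<in> A" "0 \<le> (\<Sum>j\<in>J. D j d) + D k d" using cond by blast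
      have "P beta J y s = (\<Sum>j\<in>J. phi j s) + phi k s" unfolding Pdef using AM[OF k(1)] Mv_def by simp
      also have "\<dots> \<le> (\<Sum>j\<in>J. phi j s + D j d) + phi k s + D k d" using k by (simp add: sum.distrib)
      also have "\<dots> \<le> (\<Sum>j\<in>J. phi j (s + d)) + phi k (s + d)"
      proof -
        have "(\<Sum>j\<in>J. phi j s + D j d) \<le> (\<Sum>j\<in>J. phi j (s + d))" using H1 by (intro sum_mono) auto
        moreover have "phi k s + D k d \<le> phi k (s + d)" by (rule H1)
        ultimately show ?thesis by linarith
      qed
      also have "\<dots> \<le> P beta J y u" unfolding Pdef u using Mge k(1) AJ by (intro add_left_mono) auto
      finally show "P beta J y s \<le> P beta J y u" .
    qed
  qed
qed

lemma cont_Max: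
  fixes f :: "'j \<Rightarrow> 'a::topological_space \<Rightarrow> real"
  assumes "finite J" "J \<noteq> {}" "\<And>j. j \<in> J \<Longrightarrow> continuous_on S (f j)"
  shows "continuous_on S (\<lambda>s. Max ((\<lambda>j. f j s) ` J))"
  using assms
proof (induction J rule: finite_ne_induct)
  case (singleton x) then show ?case by simp
next
  case (insert x F)
  have "continuous_on S (\<lambda>s. max (f x s) (Max ((\<lambda>j. f j s) ` F)))"
    using insert by (intro continuous_on_max) auto
  moreover have "Max ((\<lambda>j. f j s) ` insert x F) = max (f x s) (Max ((\<lambda>j. f j s) ` F))" for s
    using insert by (simp add: Max_insert)
  ultimately show ?case by simp
qed

lemma P_cont:
  fixes beta :: real and J :: "'j set" and y :: "'j \<Rightarrow> real^2"
  assumes "beta > 1" "finite J" "J \<noteq> {}"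
  shows "continuous_on UNIV (P beta J y)"
proof -
  have c: "continuous_on UNIV (\<lambda>s. norm (s - y j) powr beta)" for j
    using assms by (intro continuous_on_powr' continuous_intros) auto
  have "continuous_on UNIV (\<lambda>s. (\<Sum>j\<in>J. norm (s - y j) powr beta) + Max ((\<lambda>j. norm (s - y j) powr beta) ` J))"
    using assms c by (intro continuous_on_add continuous_on_sum cont_Max) auto
  then show ?thesis unfolding P_def[abs_def] .
qed

lemma P_ge:
  fixes beta :: real and J :: "'j set" and y :: "'j \<Rightarrow> real^2"
  assumes "finite J" "j \<in> J"
  shows "norm (s - y j) powr beta \<le> P beta J y s"
proof -
  have "norm (s - y j) powr beta \<le> (\<Sum>j\<in>J. norm (s - y j) powr beta)"
    using assms by (intro member_le_sum) auto
  moreover have "0 \<le> norm (s - y j) powr beta" by simp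
  moreover have "norm (s - y j) powr beta \<le> Max ((\<lambda>j. norm (s - y j) powr beta) ` J)"
    using assms by (intro Max_ge) auto
  ultimately show ?thesis unfolding P_def by linarith
qed

lemma P_exists:
  fixes beta :: real and J :: "'j set" and y :: "'j \<Rightarrow> real^2"
  assumes b: "beta > 1" and fin: "finite J" and ne: "J \<noteq> {}"
  shows "\<exists>s. is_minimiser (P beta J y) s"
proof -
  obtain j0 where j0: "j0 \<in> J" using ne by auto
  define C where "C = P beta J y (y j0)"
  define R where "R = max 1 (C + 1)"
  obtain s0 where s0: "s0 \<in> cball (y j0) R" "\<forall>t\<in>cball (y j0) R. P beta J y s0 \<le> P beta J y t"
    using continuous_attains_inf[of "cball (y j0) R" "P beta J y"]
      continuous_on_subset[OF P_cont[OF assms] subset_UNIV] R_def by auto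
  have "P beta J y s0 \<le> P beta J y t" for t
  proof (cases "t \<in> cball (y j0) R")
    case True then show ?thesis using s0 by auto
  next
    case False
    hence r: "norm (t - y j0) > R" by (simp add: dist_norm norm_minus_commute)
    hence r1: "norm (t - y j0) \<ge> 1" unfolding R_def by linarith
    have "C < norm (t - y j0)" using r R_def by linarith
    also have "norm (t - y j0) = norm (t - y j0) powr 1" by simp
    also have "\<dots> \<le> norm (t - y j0) powr beta" using b r1 by (intro powr_mono) auto
    also have "\<dots> \<le> P beta J y t" using P_ge[OF fin j0] .
    finally have "C < P beta J y t" .
    moreover have "P beta J y s0 \<le> C" unfolding C_def using s0 R_def by auto
    ultimately show ?thesis by linarith
  qed
  thus ?thesis unfolding is_minimiser_def by blast
qed

lemma P_unique:
  fixes beta :: real and J :: "'j set" and y :: "'j \<Rightarrow> real^2"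
  assumes b: "beta > 1" and fin: "finite J" and ne: "J \<noteq> {}"
    and m1: "is_minimiser (P beta J y) s1" and m2: "is_minimiser (P beta J y) s2"
  shows "s1 = s2"
proof (rule ccontr)
  assume neq: "s1 \<noteq> s2"
  define d where "d = s2 - s1"
  have d: "d \<noteq> 0" "s2 = s1 + d" using neq by (auto simp: d_def)
  define D where "D = (\<lambda>j d. beta * norm (s1 - y j) powr (beta - 2) * ((s1 - y j) \<bullet> d))"
  obtain k where k: "k \<in> J" "\<forall>i\<in>J. norm (s1 - y i) \<le> norm (s1 - y k)"
    "0 \<le> (\<Sum>j\<in>J. D j d) + D k d"
    using char[OF b fin ne, of y s1] m1 unfolding D_def by blast
  have Mk: "Max ((\<lambda>j. norm (s1 - y j) powr beta) ` J) = norm (s1 - y k) powr beta"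
    using k fin b by (intro Max_eqI) (auto intro: powr_mono2)
  have strict: "norm (s1 - y j) powr beta + D j d < norm (s2 - y j) powr beta" for j
    using vec_grad_strict[OF b, of "s2 - y j" "s1 - y j"] d unfolding D_def
    by (simp add: algebra_simps)
  have "P beta J y s1 = (\<Sum>j\<in>J. norm (s1 - y j) powr beta) + norm (s1 - y k) powr beta"
    unfolding P_def Mk ..
  also have "\<dots> \<le> (\<Sum>j\<in>J. norm (s1 - y j) powr beta + D j d) + norm (s1 - y k) powr beta + D k d"
    using k by (simp add: sum.distrib)
  also have "\<dots> < (\<Sum>j\<in>J. norm (s2 - y j) powr beta) + norm (s2 - y k) powr beta"
  proof -
    have "(\<Sum>j\<in>J. norm (s1 - y j) powr beta + D j d) < (\<Sum>j\<in>J. norm (s2 - y j) powr beta)"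
      using fin ne strict by (intro sum_strict_mono) auto
    moreover have "norm (s1 - y k) powr beta + D k d \<le> norm (s2 - y k) powr beta"
      using strict[of k] by simp
    ultimately show ?thesis by linarith
  qed
  also have "\<dots> \<le> P beta J y s2"
    unfolding P_def using fin k(1) by (intro add_left_mono Max_ge) auto
  finally show False using m2 unfolding is_minimiser_def by (meson not_le)
qed

theorem lemma10:
  fixes alpha :: real and J :: "'j set" and x :: "'j \<Rightarrow> real^2" and s' :: "real^2"
  assumes "alpha > 1" and "finite J" and "J \<noteq> {}"
  shows "is_minimiser (\<lambda>s. P 2 J (Xs alpha x s') s) s' \<longleftrightarrow> s' = s_star alpha J x"
proof -
  note a = assms
  have ex1: "\<exists>!s. is_minimiser (P alpha J x) s"
    using P_exists[OF a, of x] P_unique[OF a, of x] by blast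
  have star: "s' = s_star alpha J x \<longleftrightarrow> is_minimiser (P alpha J x) s'"
    unfolding s_star_def using ex1 by (metis the1_equality theI')
  define w where "w = (\<lambda>j. s' - Xs alpha x s' j)"
  have w: "w j = norm (s' - x j) powr (alpha - 2) *\<^sub>R (s' - x j)" for j
    unfolding w_def Xs_def by (simp add: algebra_simps)
  have nw: "norm (w j) = norm (s' - x j) powr (alpha - 1)" for j
  proof (cases "s' = x j")
    case True then show ?thesis by (simp add: w)
  next
    case False
    hence a0: "norm (s' - x j) > 0" by simp
    have "norm (s' - x j) powr (alpha-1) = norm (s' - x j) powr ((alpha-2)+1)" by simp
    also have "\<dots> = norm (s' - x j) powr (alpha-2) * norm (s' - x j)"
      using a0 by (simp only: powr_add powr_one norm_ge_zero)
    finally show ?thesis by (simp add: w)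
  qed
  have Aeq: "norm (w i) \<le> norm (w k) \<longleftrightarrow> norm (s' - x i) \<le> norm (s' - x k)" for i k
    unfolding nw using a by (intro powr_le_iff_base) auto
  define Df where "Df = (\<lambda>j d. alpha * norm (s' - x j) powr (alpha - 2) * ((s' - x j) \<bullet> d))"
  have Dg: "2 * norm (w j) powr (2 - 2) * (w j \<bullet> d) = (2 / alpha) * Df j d" for j d
  proof (cases "w j = 0")
    case True
    hence "norm (s' - x j) powr (alpha - 2) = 0 \<or> s' - x j = 0" using w[of j] by simp
    hence "s' - x j = 0" by simp
    then show ?thesis using True by (simp add: Df_def)
  next
    case False
    then show ?thesis using a by (simp add: Df_def w)
  qed
  have "is_minimiser (\<lambda>s. P 2 J (Xs alpha x s') s) s' \<longleftrightarrow>
     (\<forall>d. \<exists>k\<in>{k\<in>J. \<forall>i\<in>J. norm (w i) \<le> norm (w k)}.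
        0 \<le> (\<Sum>j\<in>J. 2 * norm (w j) powr (2 - 2) * (w j \<bullet> d)) + 2 * norm (w k) powr (2 - 2) * (w k \<bullet> d))"
    using char[of 2 J "Xs alpha x s'" s'] a unfolding w_def by simp
  also have "\<dots> \<longleftrightarrow> (\<forall>d. \<exists>k\<in>{k\<in>J. \<forall>i\<in>J. norm (s' - x i) \<le> norm (s' - x k)}.
        0 \<le> (2 / alpha) * ((\<Sum>j\<in>J. Df j d) + Df k d))"
    unfolding Dg Aeq by (simp add: sum_distrib_left algebra_simps)
  also have "\<dots> \<longleftrightarrow> (\<forall>d. \<exists>k\<in>{k\<in>J. \<forall>i\<in>J. norm (s' - x i) \<le> norm (s' - x k)}.
        0 \<le> (\<Sum>j\<in>J. Df j d) + Df k d)"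
  proof -
    have "0 \<le> (2 / alpha) * X \<longleftrightarrow> 0 \<le> X" for X :: real using a by (simp add: zero_le_mult_iff zero_le_divide_iff)
    then show ?thesis by (simp only:)
  qed
  also have "\<dots> \<longleftrightarrow> is_minimiser (P alpha J x) s'"
    using char[OF a, of x s'] unfolding Df_def by simp
  finally show ?thesis using star by simp
qed

end
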